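(* Let $f:V\to W$ be a smooth map between finite-dimensional real inner product spaces, $r\ge0$, and $\omega$ a $k$-form on $W$ with $|\omega|^{\natural_r}<\infty$. Then $|f^*\omega|^{\natural_r}\le|f|_{[r]}\,|\omega|^{\natural_r}$.
   Context: For a simple $k$-vector $\alpha=w_1\wedge\dots\wedge w_k$, $M(\alpha)=\sqrt{\det\langle w_i,w_j\rangle}$. A monopolar $k$-chain in $V$ is a finite formal sum $\sum_i(p_i;\alpha_i)$, $p_i\in V$, $\alpha_i\in\Lambda_k(V)$, linear in the second slot at each point. $T_u(p;\alpha)=(p+u;\alpha)$, $\Delta_u=T_u-\mathrm{id}$, $\Delta^j_U=\Delta_{u_1}\circ\dots\circ\Delta_{u_j}$ for $U=(u_1,\dots,u_j)$, $\|\Delta^j_U(p;\alpha)\|_j=|u_1|\cdots|u_j|M(\alpha)$. A $k$-form is a linear functional $\omega$ on monopolar $k$-chains; $\|\omega\|_0=\sup\{|\omega(p;\alpha)|:\alpha$ simple, $M(\alpha)=1\}$, $\|\omega\|_j=\sup\{|\omega(\Delta^j_U(p;\alpha))|:\|\Delta^j_U(p;\alpha)\|_j=1\}$, $|\omega|^{\natural_r}=\max_{0\le j\le r}\|\omega\|_j$, $\mathcal B_k^r$ = forms with finite $|\omega|^{\natural_r}$. For a chain $P$, $|P|^{\natural_r}=\sup_{0\ne\omega\in\mathcal B_k^r}\omega(P)/|\omega|^{\natural_r}$. Pushforward: $f_*(x;v_1\wedge\dots\wedge v_k)=(f(x);Df_x v_1\wedge\dots\wedge Df_xv_k)$, extended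 linearly. $\|f\|_{[j]}=\sup|f_*\Delta^j_U(x;\alpha)|^{\natural_j}/\|\Delta^j_U(x;\alpha)\|_j$ over $x$, nonzero $U$ and nonzero simple $\alpha$, and $|f|_{[r]}=\max\{\|f\|_{[0]},\dots,\|f\|_{[r]}\}$. Pullback: $f^*\omega(x;\alpha)=\omega(f_*(x;\alpha))$. *)

theory Defs
  imports "HOL-Analysis.Analysis" "HOL-Combinatorics.Permutations"
begin

text \<open>C-infinity smoothness: there is a family of iterated derivatives D n x us
  (the n-th derivative at x applied to the directions us 0, ..., us (n-1)),
  with D 0 = f, such that each x -> D n x us is Frechet differentiable with
  derivative h -> D (n+1) x (us(n := h)).\<close>
definition smooth_map :: "('a::real_normed_vector \<Rightarrow> 'b::real_normed_vector) \<Rightarrow> bool" where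
  "smooth_map f \<longleftrightarrow> (\<exists>D :: nat \<Rightarrow> 'a \<Rightarrow> (nat \<Rightarrow> 'a) \<Rightarrow> 'b.
      (\<forall>x us. D 0 x us = f x) \<and>
      (\<forall>n x us. ((\<lambda>y. D n y us) has_derivative (\<lambda>h. D (Suc n) x (us(n := h)))) (at x)))"

text \<open>Gram determinant det (w_i . w_j)_{i,j<k} (Leibniz formula) and the mass
  M(c w_0 /\ ... /\ w_(k-1)) = |c| sqrt(det Gram) of a simple k-vector.\<close>
definition gram_det :: "nat \<Rightarrow> (nat \<Rightarrow> 'a::real_inner) \<Rightarrow> real" where
  "gram_det k ws = (\<Sum>\<sigma> | \<sigma> permutes {..<k}. of_int (sign \<sigma>) * (\<Prod>i<k. inner (ws i) (ws (\<sigma> i))))"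

definition mass :: "nat \<Rightarrow> real \<Rightarrow> (nat \<Rightarrow> 'a::real_inner) \<Rightarrow> real" where
  "mass k c ws = \<bar>c\<bar> * sqrt (gram_det k ws)"

text \<open>A monopolar k-chain: finite formal sum of terms c (p; w_0 /\ ... /\ w_(k-1)).\<close>
type_synonym 'a chain = "(real \<times> 'a \<times> (nat \<Rightarrow> 'a)) list"

text \<open>A k-form: at every point an alternating k-linear functional
  (equivalently a linear functional on Lambda_k), i.e. a linear functional on chains.\<close>
definition is_kform :: "nat \<Rightarrow> ('a::real_vector \<Rightarrow> (nat \<Rightarrow> 'a) \<Rightarrow> real) \<Rightarrow> bool" where
  "is_kform k \<omega> \<longleftrightarrow> (\<forall>p.
      (\<forall>ws ws'. (\<forall>i<k. ws i = ws' i) \<longrightarrow> \<omega> p ws = \<omega> p ws') \<and>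
      (\<forall>ws i. i < k \<longrightarrow> linear (\<lambda>v. \<omega> p (ws(i := v)))) \<and>
      (\<forall>ws i j. i < k \<and> j < k \<and> i \<noteq> j \<and> ws i = ws j \<longrightarrow> \<omega> p ws = 0))"

definition chain_eval :: "('a \<Rightarrow> (nat \<Rightarrow> 'a) \<Rightarrow> real) \<Rightarrow> 'a chain \<Rightarrow> real" where
  "chain_eval \<omega> P = (\<Sum>(c, p, ws)\<leftarrow>P. c * \<omega> p ws)"

definition translate :: "'a::plus \<Rightarrow> 'a chain \<Rightarrow> 'a chain" where
  "translate u P = map (\<lambda>(c, p, ws). (c, p + u, ws)) P"

definition chain_neg :: "'a chain \<Rightarrow> 'a chain" where
  "chain_neg P = map (\<lambda>(c, p, ws). (- c, p, ws)) P"

definition diff_op :: "'a::plus \<Rightarrow> 'a chain \<Rightarrow> 'a chain" where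
  "diff_op u P = translate u P @ chain_neg P"

definition delta :: "'a::plus list \<Rightarrow> 'a chain \<Rightarrow> 'a chain" where
  "delta U P = foldr diff_op U P"

definition dnorm :: "nat \<Rightarrow> 'a::real_inner list \<Rightarrow> real \<Rightarrow> (nat \<Rightarrow> 'a) \<Rightarrow> real" where
  "dnorm k U c ws = (\<Prod>u\<leftarrow>U. norm u) * mass k c ws"

text \<open>||omega||_j (for j = 0 this is ||omega||_0). Sups are taken in ereal,
  with the convention sup of the empty set = 0 (all quantities are nonnegative).\<close>
definition form_seminorm :: "nat \<Rightarrow> nat \<Rightarrow> ('a::real_inner \<Rightarrow> (nat \<Rightarrow> 'a) \<Rightarrow> real) \<Rightarrow> ereal" where
  "form_seminorm k j \<omega> = Sup (insert 0
      {ereal \<bar>chain_eval \<omega> (delta U [(c, p, ws)])\<bar> | U p c ws.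
         length U = j \<and> dnorm k U c ws = 1})"

definition natural_norm :: "nat \<Rightarrow> nat \<Rightarrow> ('a::real_inner \<Rightarrow> (nat \<Rightarrow> 'a) \<Rightarrow> real) \<Rightarrow> ereal" where
  "natural_norm k r \<omega> = Max ((\<lambda>j. form_seminorm k j \<omega>) ` {..r})"

definition chain_norm :: "nat \<Rightarrow> nat \<Rightarrow> 'a::real_inner chain \<Rightarrow> ereal" where
  "chain_norm k r P = Sup (insert 0
      {ereal (chain_eval \<omega> P / real_of_ereal (natural_norm k r \<omega>)) | \<omega>.
         is_kform k \<omega> \<and> natural_norm k r \<omega> < \<infinity> \<and> (\<exists>p ws. \<omega> p ws \<noteq> 0)})"

definition Dmap :: "('a::real_normed_vector \<Rightarrow> 'b::real_normed_vector) \<Rightarrow> 'a \<Rightarrow> 'a \<Rightarrow> 'b" where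
  "Dmap f x = frechet_derivative f (at x)"

definition push :: "('a::real_normed_vector \<Rightarrow> 'b::real_normed_vector) \<Rightarrow> 'a chain \<Rightarrow> 'b chain" where
  "push f P = map (\<lambda>(c, p, ws). (c, f p, \<lambda>i. Dmap f p (ws i))) P"

definition pullback :: "('a::real_normed_vector \<Rightarrow> 'b::real_normed_vector) \<Rightarrow>
    ('b \<Rightarrow> (nat \<Rightarrow> 'b) \<Rightarrow> real) \<Rightarrow> ('a \<Rightarrow> (nat \<Rightarrow> 'a) \<Rightarrow> real)" where
  "pullback f \<omega> = (\<lambda>x ws. \<omega> (f x) (\<lambda>i. Dmap f x (ws i)))"

definition map_seminorm :: "nat \<Rightarrow> nat \<Rightarrow> ('a::real_inner \<Rightarrow> 'b::real_inner) \<Rightarrow> ereal" where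
  "map_seminorm k j f = Sup (insert 0
      {chain_norm k j (push f (delta U [(c, x, ws)])) / ereal (dnorm k U c ws) | U x c ws.
         length U = j \<and> (\<forall>u\<in>set U. u \<noteq> 0) \<and> mass k c ws \<noteq> 0})"

definition map_norm :: "nat \<Rightarrow> nat \<Rightarrow> ('a::real_inner \<Rightarrow> 'b::real_inner) \<Rightarrow> ereal" where
  "map_norm k r f = Max ((\<lambda>j. map_seminorm k j f) ` {..r})"

end

theory Submission
  imports Defs
begin

lemma chain_eval_pullback:
  "chain_eval (pullback f \<omega>) P = chain_eval \<omega> (push f P)"
  by (induction P) (auto simp: chain_eval_def push_def pullback_def)

lemma chain_eval_neg:
  "chain_eval (\<lambda>p ws. - \<omega> p ws) P = - chain_eval \<omega> P"
  by (induction P) (auto simp: chain_eval_def)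

lemma chain_eval_zero:
  "(\<forall>p ws. \<omega> p ws = 0) \<Longrightarrow> chain_eval \<omega> P = 0"
  by (induction P) (auto simp: chain_eval_def)

lemma form_seminorm_neg:
  "form_seminorm k j (\<lambda>p ws. - \<omega> p ws) = form_seminorm k j \<omega>"
  unfolding form_seminorm_def chain_eval_neg by simp

lemma natural_norm_neg:
  "natural_norm k j (\<lambda>p ws. - \<omega> p ws) = natural_norm k j \<omega>"
  unfolding natural_norm_def form_seminorm_neg by simp

lemma is_kform_neg:
  assumes "is_kform k \<omega>" shows "is_kform k (\<lambda>p ws. - \<omega> p ws)"
  using assms unfolding is_kform_def
  by (auto intro: linear_compose_neg[unfolded o_def])

lemma form_seminorm_nonneg: "0 \<le> form_seminorm k j \<omega>"
  unfolding form_seminorm_def by (rule Sup_upper) simp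

lemma natural_norm_ge: "i \<le> j \<Longrightarrow> form_seminorm k i \<omega> \<le> natural_norm k j \<omega>"
  unfolding natural_norm_def by (rule Max_ge) auto

lemma natural_norm_mono: "i \<le> j \<Longrightarrow> natural_norm k i \<omega> \<le> natural_norm k j \<omega>"
  unfolding natural_norm_def by (subst Max_le_iff) (auto intro!: Max_ge)

lemma map_seminorm_nonneg: "0 \<le> map_seminorm k j f"
  unfolding map_seminorm_def by (rule Sup_upper) simp

lemma map_norm_ge: "i \<le> j \<Longrightarrow> map_seminorm k i f \<le> map_norm k j f"
  unfolding map_norm_def by (rule Max_ge) auto

lemma chain_norm_nonneg: "0 \<le> chain_norm k j P"
  unfolding chain_norm_def by (rule Sup_upper) simp

lemma gram_det_basis:
  fixes e :: "nat \<Rightarrow> 'a::euclidean_space"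
  assumes B: "\<forall>l<k. e l \<in> Basis" and inj: "inj_on e {..<k}"
  shows "gram_det k e = 1"
proof -
  let ?t = "\<lambda>\<sigma>. of_int (sign \<sigma>) * (\<Prod>i<k. inner (e i) (e (\<sigma> i))) :: real"
  have fin: "finite {\<sigma>. \<sigma> permutes {..<k}}" by (simp add: finite_permutations)
  have idin: "id \<in> {\<sigma>. \<sigma> permutes {..<k}}" by (simp add: permutes_id)
  have z: "?t \<sigma> = 0" if "\<sigma> \<in> {\<sigma>. \<sigma> permutes {..<k}} - {id}" for \<sigma>
  proof -
    from that have p: "\<sigma> permutes {..<k}" and ne: "\<sigma> \<noteq> id" by auto
    then obtain i where i: "\<sigma> i \<noteq> i" by (metis eq_id_iff)
    have ik: "i < k" using p i by (meson lessThan_iff permutes_not_in)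
    have sik: "\<sigma> i < k" using permutes_in_image[OF p, of i] ik by simp
    have "e i \<noteq> e (\<sigma> i)" using inj ik sik i unfolding inj_on_def by (metis lessThan_iff)
    then have "inner (e i) (e (\<sigma> i)) = 0" using B ik sik by (simp add: inner_not_same_Basis)
    then have "(\<Prod>i<k. inner (e i) (e (\<sigma> i))) = 0"
      using ik by (intro prod_zero) auto
    then show ?thesis by simp
  qed
  have "gram_det k e = ?t id + sum ?t ({\<sigma>. \<sigma> permutes {..<k}} - {id})"
    unfolding gram_det_def by (rule sum.remove[OF fin idin])
  also have "sum ?t ({\<sigma>. \<sigma> permutes {..<k}} - {id}) = 0" using z by (intro sum.neutral) blast
  also have "?t id = 1" using B by (simp add: sign_id inner_Basis)
  finally show ?thesis by simp
qed

lemma kform_reduce: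
  fixes \<omega> :: "'a::euclidean_space \<Rightarrow> (nat \<Rightarrow> 'a) \<Rightarrow> real"
  assumes K: "is_kform k \<omega>"
    and H: "\<forall>ws. (\<forall>l<k. ws l \<in> Basis) \<longrightarrow> \<omega> p ws = 0"
  shows "m \<le> k \<Longrightarrow> \<forall>ws. (\<forall>l. m \<le> l \<and> l < k \<longrightarrow> ws l \<in> Basis) \<longrightarrow> \<omega> p ws = 0"
proof (induction m)
  case 0
  then show ?case using H by auto
next
  case (Suc m)
  then have mk: "m < k" by simp
  have IH: "\<forall>ws. (\<forall>l. m \<le> l \<and> l < k \<longrightarrow> ws l \<in> Basis) \<longrightarrow> \<omega> p ws = 0"
    using Suc by simp
  show ?case
  proof (intro allI impI)
    fix ws :: "nat \<Rightarrow> 'a"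
    assume ws: "\<forall>l. Suc m \<le> l \<and> l < k \<longrightarrow> ws l \<in> Basis"
    have lin: "linear (\<lambda>v. \<omega> p (ws(m := v)))" using K mk unfolding is_kform_def by blast
    have "\<omega> p ws = \<omega> p (ws(m := (\<Sum>b\<in>Basis. (ws m \<bullet> b) *\<^sub>R b)))"
      by (simp add: euclidean_representation)
    also have "\<dots> = (\<Sum>b\<in>Basis. (ws m \<bullet> b) * \<omega> p (ws(m := b)))"
      using linear_sum[OF lin, of "\<lambda>b. (ws m \<bullet> b) *\<^sub>R b" Basis] linear_scale[OF lin] by simp
    also have "\<dots> = 0"
    proof (intro sum.neutral ballI)
      fix b :: 'a assume b: "b \<in> Basis"
      have "\<omega> p (ws(m := b)) = 0"
        using IH[rule_format, of "ws(m := b)"] ws b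
        by (metis Suc_leI fun_upd_apply le_neq_implies_less)
      then show "(ws m \<bullet> b) * \<omega> p (ws(m := b)) = 0" by simp
    qed
    finally show "\<omega> p ws = 0" .
  qed
qed

lemma kform_nonzero_basis:
  fixes \<omega> :: "'a::euclidean_space \<Rightarrow> (nat \<Rightarrow> 'a) \<Rightarrow> real"
  assumes K: "is_kform k \<omega>" and nz: "\<omega> p ws \<noteq> 0"
  shows "\<exists>e. gram_det k e = 1 \<and> \<omega> p e \<noteq> 0"
proof (rule ccontr)
  assume "\<not> ?thesis"
  then have A: "\<forall>e. gram_det k e = 1 \<longrightarrow> \<omega> p e = 0" by blast
  have H: "\<forall>ws. (\<forall>l<k. ws l \<in> Basis) \<longrightarrow> \<omega> p ws = 0"
  proof (intro allI impI)
    fix e :: "nat \<Rightarrow> 'a" assume B: "\<forall>l<k. e l \<in> Basis"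
    show "\<omega> p e = 0"
    proof (cases "inj_on e {..<k}")
      case True
      then show ?thesis using A gram_det_basis[OF B True] by blast
    next
      case False
      then obtain i j where "i < k" "j < k" "i \<noteq> j" "e i = e j"
        unfolding inj_on_def by auto
      then show ?thesis using K unfolding is_kform_def by blast
    qed
  qed
  have "\<omega> p ws = 0" using kform_reduce[OF K H, of k] by force
  with nz show False by simp
qed

lemma form_seminorm0_pos:
  fixes \<omega> :: "'a::euclidean_space \<Rightarrow> (nat \<Rightarrow> 'a) \<Rightarrow> real"
  assumes K: "is_kform k \<omega>" and nz: "\<omega> p ws \<noteq> 0"
  shows "0 < form_seminorm k 0 \<omega>"
proof -
  obtain e where e: "gram_det k e = 1" "\<omega> p e \<noteq> 0"
    using kform_nonzero_basis[OF K nz] by blast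
  have "ereal \<bar>chain_eval \<omega> (delta [] [(1, p, e)])\<bar> \<le> form_seminorm k 0 \<omega>"
    unfolding form_seminorm_def
    by (rule Sup_upper, rule insertI2, rule CollectI, rule exI[of _ "[]"], rule exI[of _ p],
        rule exI[of _ 1], rule exI[of _ e]) (simp add: dnorm_def mass_def e)
  moreover have "chain_eval \<omega> (delta [] [(1, p, e)]) = \<omega> p e"
    by (simp add: delta_def chain_eval_def)
  ultimately show ?thesis using e(2)
    by (metis zero_less_abs_iff ereal_less(2) order_less_le_trans)
qed

theorem mainTheorem5:
  fixes f :: "'a::euclidean_space \<Rightarrow> 'b::euclidean_space"
    and \<omega> :: "'b \<Rightarrow> (nat \<Rightarrow> 'b) \<Rightarrow> real"
    and k r :: nat
  assumes "smooth_map f"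
    and "is_kform k \<omega>"
    and "natural_norm k r \<omega> < \<infinity>"
  shows "natural_norm k r (pullback f \<omega>) \<le> map_norm k r f * natural_norm k r \<omega>"
proof -
  let ?R = "map_norm k r f * natural_norm k r \<omega>"
  have mn0: "0 \<le> map_norm k r f"
    using map_seminorm_nonneg[of k 0 f] map_norm_ge[of 0 r k f] by simp
  have nn0: "0 \<le> natural_norm k r \<omega>"
    using form_seminorm_nonneg[of k 0 \<omega>] natural_norm_ge[of 0 r k \<omega>] by simp
  have R0: "0 \<le> ?R" using mn0 nn0 by simp
  have key: "form_seminorm k j (pullback f \<omega>) \<le> ?R" if jr: "j \<le> r" for j
    unfolding form_seminorm_def
  proof (rule Sup_least)
    fix y assume "y \<in> insert 0 {ereal \<bar>chain_eval (pullback f \<omega>) (delta U [(c, p, ws)])\<bar> | U p c ws.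
         length U = j \<and> dnorm k U c ws = 1}"
    then consider "y = 0" | U p c ws where "y = ereal \<bar>chain_eval (pullback f \<omega>) (delta U [(c, p, ws)])\<bar>"
      "length U = j" "dnorm k U c ws = 1" by blast
    then show "y \<le> ?R"
    proof cases
      case 1 then show ?thesis using R0 by simp
    next
      case 2
      let ?Q = "push f (delta U [(c, p, ws)])"
      have y: "y = ereal \<bar>chain_eval \<omega> ?Q\<bar>" using 2 by (simp add: chain_eval_pullback)
      show ?thesis
      proof (cases "\<forall>p ws. \<omega> p ws = 0")
        case True
        then show ?thesis using y R0 chain_eval_zero[OF True] by (simp add: zero_ereal_def[symmetric])
      next
        case False
        then obtain p0 ws0 where nz: "\<omega> p0 ws0 \<noteq> 0" by blast
        have pos: "0 < natural_norm k j \<omega>"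
          using form_seminorm0_pos[OF assms(2) nz] natural_norm_ge[of 0 j k \<omega>] by simp
        have le: "natural_norm k j \<omega> \<le> natural_norm k r \<omega>" using natural_norm_mono[OF jr] .
        have fin: "natural_norm k j \<omega> < \<infinity>" using le assms(3) by (meson order.strict_trans1)
        obtain a where a: "natural_norm k j \<omega> = ereal a" "0 < a"
          using pos fin by (cases "natural_norm k j \<omega>") auto
        have h1: "ereal (chain_eval \<omega> ?Q / a) \<le> chain_norm k j ?Q"
          unfolding chain_norm_def
          by (rule Sup_upper, rule insertI2, rule CollectI, rule exI[of _ \<omega>])
            (use assms(2) fin nz a in auto)
        have h2: "ereal (chain_eval (\<lambda>p ws. - \<omega> p ws) ?Q / a) \<le> chain_norm k j ?Q"
          unfolding chain_norm_def
          by (rule Sup_upper, rule insertI2, rule CollectI, rule exI[of _ "\<lambda>p ws. - \<omega> p ws"])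
            (use is_kform_neg[OF assms(2)] fin nz a in \<open>auto simp: natural_norm_neg\<close>)
        have h12: "ereal (\<bar>chain_eval \<omega> ?Q\<bar> / a) \<le> chain_norm k j ?Q"
          using h1 h2 unfolding chain_eval_neg
          by (cases "chain_eval \<omega> ?Q \<ge> 0") auto
        have ya: "y = ereal (\<bar>chain_eval \<omega> ?Q\<bar> / a) * natural_norm k j \<omega>"
          using y a by simp
        have U0: "\<forall>u\<in>set U. u \<noteq> 0" and m0: "mass k c ws \<noteq> 0"
          using 2(3) unfolding dnorm_def
          by (auto, metis (mono_tags) image_eqI norm_zero prod_list_zero_iff set_map mult_zero_left zero_neq_one)
        have h3: "chain_norm k j ?Q \<le> map_seminorm k j f"
          unfolding map_seminorm_def
          by (rule order_trans[rotated], rule Sup_upper, rule insertI2, rule CollectI,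
              rule exI[of _ U], rule exI[of _ p], rule exI[of _ c], rule exI[of _ ws])
            (use 2 U0 m0 in \<open>auto simp: one_ereal_def[symmetric]\<close>)
        have h4: "chain_norm k j ?Q \<le> map_norm k r f"
          using h3 map_norm_ge[OF jr, of k f] by simp
        have "y \<le> chain_norm k j ?Q * natural_norm k j \<omega>"
          unfolding ya by (rule ereal_mult_right_mono[OF h12]) (use pos in simp)
        also have "\<dots> \<le> ?R"
          by (rule ereal_mult_mono[OF mn0]) (use pos h4 le in auto)
        finally show ?thesis .
      qed
    qed
  qed
  show ?thesis unfolding natural_norm_def[of k r "pullback f \<omega>"]
    using key by (subst Max_le_iff) auto
qed

end
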